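(* Let $F$ be a $\theta\mathrm{DMBPP}(\lambda,\Psi_\eta,\mathcal{V},\Psi_\theta)$, defined such that $\mathcal{V}$ is a set of equicontinuous functions and such that for every $j\ge1$ the stochastic process $\eta_j$ is a.s. continuous. Then for every sequence $\{x_l\}_{l\ge0}\subseteq\mathcal{X}$ with $\lim_{l\to\infty}x_l=x_0$, $$\lim_{l\to\infty}\sup_{B\in\mathcal{B}(\Delta_m)}|F_{x_l}(B)-F_{x_0}(B)|=0\quad\text{a.s.},$$ i.e., $F_{x_l}$ converges a.s. in total variation norm to $F_{x_0}$.
   Context: Let $m,p\ge 1$. $\Delta_m=\{y\in[0,1]^m:\sum_{i=1}^m y_i\le 1\}$, $\Delta_m^0=\{y\in\Delta_m: y_i>0\ \forall i\}$, $\mathcal{B}(\Delta_m)$ its Borel sets. $\mathrm{dir}(y\mid\alpha)$, $\alpha=(\alpha_1,\dots,\alpha_{m+1})$, is the Dirichlet density $\frac{\Gamma(\sum_i\alpha_i)}{\prod_i\Gamma(\alpha_i)}\prod_{i=1}^m y_i^{\alpha_i-1}(1-\sum_i y_i)^{\alpha_{m+1}-1}$. For $k\in\mathbb{N}$, $\alpha(k,\mathbf{j})=(j_1,\dots,j_m,k+m-\|\mathbf{j}\|_1)$, $\lceil k\theta\rceil=(\lceil k\theta_1\rceil,\dots,\lceil k\theta_m\rceil)$. $\mathcal{X}\subseteq\mathbb{R}^p$. $\mathcal{V}=\{v_x:x\in\mathcal{X}\}$: known continuous functions (described as bijective) $v_x:\mathbb{R}\to[0,1]$ with $x\mapsto v_x(a)$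 continuous for every $a$; "$\mathcal{V}$ is a set of equicontinuous functions" means $\{x\mapsto v_x(a):a\in\mathbb{R}\}$ is equicontinuous. $\theta\mathrm{DMBPP}(\lambda,\Psi_\eta,\mathcal{V},\Psi_\theta)$: $\eta_j$, $j\ge1$, i.i.d. real-valued stochastic processes on $\mathcal{X}$ (law indexed by finite-dimensional $\Psi_\eta$); $\theta_j$, $j\ge1$, i.i.d. $\Delta_m^0$-valued random vectors (law indexed by $\Psi_\theta$); $k\in\mathbb{N}$ random (law indexed by $\lambda$); $F_x$ is the probability measure on $\Delta_m$ with Lebesgue density $f_x(\cdot)=\sum_{j\ge1}w_j(x)\mathrm{dir}(\cdot\mid\alpha(k,\lceil k\theta_j\rceil))$, $w_j(x)=V_j(x)\prod_{l<j}(1-V_l(x))$, $V_j(x)=v_x(\eta_j(x))$. The weights sum to one a.s. *)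

theory Defs
  imports "HOL-Probability.Probability"
begin

definition dm_simplex :: "(real ^ 'm::finite) set" where
  "dm_simplex = {y. (\<forall>i. 0 \<le> y $ i \<and> y $ i \<le> 1) \<and> (\<Sum>i\<in>UNIV. y $ i) \<le> 1}"

definition dm_simplex0 :: "(real ^ 'm::finite) set" where
  "dm_simplex0 = {y \<in> dm_simplex. \<forall>i. 0 < y $ i}"

text \<open>Dirichlet density dir(y | a_1..a_m, a_last), for positive integer parameters
  (the only ones occurring below); exponents a - 1 are natural numbers.\<close>
definition dir_dens :: "('m::finite \<Rightarrow> nat) \<Rightarrow> nat \<Rightarrow> real ^ 'm \<Rightarrow> real" where
  "dir_dens a al y =
     Gamma (real ((\<Sum>i\<in>UNIV. a i) + al)) / ((\<Prod>i\<in>UNIV. Gamma (real (a i))) * Gamma (real al))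
     * (\<Prod>i\<in>UNIV. (y $ i) ^ (a i - 1)) * (1 - (\<Sum>i\<in>UNIV. y $ i)) ^ (al - 1)"

text \<open>alpha(k, ceil(k theta)) = (ceil(k theta_1), ..., ceil(k theta_m), k + m - sum_i ceil(k theta_i)).\<close>
definition ceil_vec :: "nat \<Rightarrow> real ^ 'm \<Rightarrow> ('m::finite \<Rightarrow> nat)" where
  "ceil_vec k th = (\<lambda>i. nat \<lceil>real k * th $ i\<rceil>)"

definition alpha_last :: "nat \<Rightarrow> ('m::finite \<Rightarrow> nat) \<Rightarrow> nat" where
  "alpha_last k j = k + CARD('m) - (\<Sum>i\<in>UNIV. j i)"

text \<open>Stick-breaking: V_j(x) = v_x(eta_j(x)), w_j(x) = V_j(x) prod_{l<j} (1 - V_l(x)).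
  Indices start at 0 (relabelling of j >= 1).\<close>
definition sb_V :: "('x \<Rightarrow> real \<Rightarrow> real) \<Rightarrow> (nat \<Rightarrow> 'w \<Rightarrow> 'x \<Rightarrow> real) \<Rightarrow> nat \<Rightarrow> 'x \<Rightarrow> 'w \<Rightarrow> real" where
  "sb_V v eta j x \<omega> = v x (eta j \<omega> x)"

definition sb_w :: "('x \<Rightarrow> real \<Rightarrow> real) \<Rightarrow> (nat \<Rightarrow> 'w \<Rightarrow> 'x \<Rightarrow> real) \<Rightarrow> nat \<Rightarrow> 'x \<Rightarrow> 'w \<Rightarrow> real" where
  "sb_w v eta j x \<omega> = sb_V v eta j x \<omega> * (\<Prod>l<j. 1 - sb_V v eta l x \<omega>)"

definition dmbpp_dens ::
  "('x \<Rightarrow> real \<Rightarrow> real) \<Rightarrow> (nat \<Rightarrow> 'w \<Rightarrow> 'x \<Rightarrow> real) \<Rightarrow> (nat \<Rightarrow> 'w \<Rightarrow> real ^ 'm::finite)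
   \<Rightarrow> ('w \<Rightarrow> nat) \<Rightarrow> 'x \<Rightarrow> 'w \<Rightarrow> real ^ 'm \<Rightarrow> real" where
  "dmbpp_dens v eta theta k x \<omega> y =
     indicator dm_simplex y *
     (\<Sum>j. sb_w v eta j x \<omega> *
        dir_dens (ceil_vec (k \<omega>) (theta j \<omega>))
                 (alpha_last (k \<omega>) (ceil_vec (k \<omega>) (theta j \<omega>))) y)"

definition dmbpp_F ::
  "('x \<Rightarrow> real \<Rightarrow> real) \<Rightarrow> (nat \<Rightarrow> 'w \<Rightarrow> 'x \<Rightarrow> real) \<Rightarrow> (nat \<Rightarrow> 'w \<Rightarrow> real ^ 'm::finite)
   \<Rightarrow> ('w \<Rightarrow> nat) \<Rightarrow> 'x \<Rightarrow> 'w \<Rightarrow> (real ^ 'm) measure" where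
  "dmbpp_F v eta theta k x \<omega> = density lborel (\<lambda>y. ennreal (dmbpp_dens v eta theta k x \<omega> y))"

end

theory Submission imports Defs begin

definition dir_const :: "('m::finite \<Rightarrow> nat) \<Rightarrow> nat \<Rightarrow> real" where
  "dir_const a al = Gamma (real ((\<Sum>i\<in>UNIV. a i) + al)) / ((\<Prod>i\<in>UNIV. Gamma (real (a i))) * Gamma (real al))"

lemma dir_dens_alt: "dir_dens a al y = dir_const a al * (\<Prod>i\<in>UNIV. (y $ i) ^ (a i - 1)) * (1 - (\<Sum>i\<in>UNIV. y $ i)) ^ (al - 1)"
  by (simp add: dir_dens_def dir_const_def)

lemma dir_dens_bound:
  assumes "y \<in> dm_simplex"
  shows "\<bar>dir_dens a al y\<bar> \<le> \<bar>dir_const a al\<bar>"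
proof -
  have y: "\<And>i. 0 \<le> y $ i \<and> y $ i \<le> 1" "(\<Sum>i\<in>UNIV. y $ i) \<le> 1"
    using assms by (auto simp: dm_simplex_def)
  have p0: "0 \<le> (\<Prod>i\<in>UNIV. (y $ i) ^ (a i - 1))" using y by (simp add: prod_nonneg)
  have p1: "(\<Prod>i\<in>UNIV. (y $ i) ^ (a i - 1)) \<le> 1" using y by (intro prod_le_1) (auto simp: power_le_one)
  have s0: "0 \<le> (\<Sum>i\<in>UNIV. y $ i)" using y by (simp add: sum_nonneg)
  have q0: "0 \<le> (1 - (\<Sum>i\<in>UNIV. y $ i)) ^ (al - 1)" using y by simp
  have q1: "(1 - (\<Sum>i\<in>UNIV. y $ i)) ^ (al - 1) \<le> 1" using y s0 by (intro power_le_one) auto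
  have "\<bar>dir_dens a al y\<bar> = \<bar>dir_const a al\<bar> * ((\<Prod>i\<in>UNIV. (y $ i) ^ (a i - 1)) * (1 - (\<Sum>i\<in>UNIV. y $ i)) ^ (al - 1))"
    using p0 q0 by (simp add: dir_dens_alt abs_mult)
  also have "\<dots> \<le> \<bar>dir_const a al\<bar> * 1"
    by (intro mult_left_mono) (use p0 p1 q0 q1 in \<open>auto intro: mult_le_one\<close>)
  finally show ?thesis by simp
qed

lemma dir_dens_meas: "dir_dens a al \<in> borel_measurable borel"
  unfolding dir_dens_alt by (intro borel_measurable_continuous_onI continuous_intros)

lemma closed_dm_simplex: "closed (dm_simplex :: (real ^ 'm::finite) set)"
proof -
  have "dm_simplex = (\<Inter>i. {y::real^'m. 0 \<le> y $ i} \<inter> {y. y $ i \<le> 1}) \<inter> {y. (\<Sum>i\<in>UNIV. y $ i) \<le> 1}"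
    by (auto simp: dm_simplex_def)
  also have "closed \<dots>"
    by (intro closed_Int closed_INT ballI closed_Collect_le continuous_on_const continuous_on_component continuous_on_id continuous_on_sum)
  finally show ?thesis .
qed

lemma dm_simplex_sub: "dm_simplex \<subseteq> cbox (0::real^'m::finite) (vec 1)"
  by (auto simp: dm_simplex_def mem_box_cart)

lemma ceil_vec_le:
  assumes "th \<in> dm_simplex0"
  shows "ceil_vec K th i \<le> K"
proof -
  have "th $ i \<le> 1" using assms by (auto simp: dm_simplex0_def dm_simplex_def)
  then have "real K * th $ i \<le> real K" by (simp add: mult_left_le)
  then have "\<lceil>real K * th $ i\<rceil> \<le> int K" by (intro ceiling_le) simp
  then show ?thesis unfolding ceil_vec_def by (metis nat_le_iff)
qed

lemma finite_bounded_funs: "finite {a :: 'm::finite \<Rightarrow> nat. \<forall>i. a i \<le> K}"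
proof -
  have "{a :: 'm \<Rightarrow> nat. \<forall>i. a i \<le> K} = PiE UNIV (\<lambda>_. {..K})"
    by (auto simp: PiE_def extensional_def)
  then show ?thesis by (simp add: finite_PiE)
qed

lemma scheffe_seq:
  fixes a :: "nat \<Rightarrow> nat \<Rightarrow> real" and b :: "nat \<Rightarrow> real"
  assumes a0: "\<And>l j. 0 \<le> a l j" and b0: "\<And>j. 0 \<le> b j"
    and as: "\<And>l. a l sums 1" and bs: "b sums 1"
    and lim: "\<And>j. (\<lambda>l. a l j) \<longlonglongrightarrow> b j"
  shows "(\<lambda>l. \<Sum>j. \<bar>a l j - b j\<bar>) \<longlonglongrightarrow> 0"
proof -
  have sa: "summable (a l)" for l using as[of l] by (simp add: sums_iff)
  have sb: "summable b" using bs by (simp add: sums_iff)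
  have sd: "summable (\<lambda>j. \<bar>a l j - b j\<bar>)" for l
    by (rule summable_comparison_test[where g="\<lambda>j. a l j + b j"])
       (use a0 b0 sa sb in \<open>auto intro!: summable_add exI[of _ 0] abs_triangle_ineq4[THEN order_trans]\<close>)
  have key: "(\<Sum>j. \<bar>a l j - b j\<bar>) \<le> 2 * (\<Sum>j<N. \<bar>a l j - b j\<bar>) + 2 * (\<Sum>j. b (j + N))" for l N
  proof -
    have e1: "(\<Sum>j. \<bar>a l j - b j\<bar>) = (\<Sum>j<N. \<bar>a l j - b j\<bar>) + (\<Sum>j. \<bar>a l (j+N) - b (j+N)\<bar>)"
      using suminf_split_initial_segment[OF sd[of l], of N] by (simp add: suminf_split_head)
    have sa': "summable (\<lambda>j. a l (j+N))" using sa[of l] by (simp add: summable_iff_shift)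
    have sb': "summable (\<lambda>j. b (j+N))" using sb by (simp add: summable_iff_shift)
    have sd': "summable (\<lambda>j. \<bar>a l (j+N) - b (j+N)\<bar>)" using sd[of l] summable_iff_shift[where f="\<lambda>j. \<bar>a l j - b j\<bar>" and k=N] by simp
    have e2: "(\<Sum>j. \<bar>a l (j+N) - b (j+N)\<bar>) \<le> (\<Sum>j. a l (j+N)) + (\<Sum>j. b (j+N))"
      apply (subst suminf_add[OF sa' sb'])
      apply (rule suminf_le[OF _ sd' summable_add[OF sa' sb']])
      using a0 b0 by (smt (verit))
    have ta: "(\<Sum>j. a l (j+N)) = 1 - (\<Sum>j<N. a l j)"
      using suminf_split_initial_segment[OF sa[of l], of N] as[of l] by (simp add: sums_iff)
    have tb: "(\<Sum>j. b (j+N)) = 1 - (\<Sum>j<N. b j)"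
      using suminf_split_initial_segment[OF sb, of N] bs by (simp add: sums_iff)
    have "(\<Sum>j<N. b j) - (\<Sum>j<N. a l j) \<le> (\<Sum>j<N. \<bar>a l j - b j\<bar>)"
      by (simp add: sum_subtractf[symmetric] sum_mono)
    then show ?thesis using e1 e2 ta tb by linarith
  qed
  have tail: "(\<lambda>N. \<Sum>j. b (j + N)) \<longlonglongrightarrow> 0"
    by (rule suminf_exist_split2[OF sb])
  show ?thesis
  proof (rule LIMSEQ_I)
    fix r :: real assume r: "0 < r"
    from tail r obtain N where N: "\<bar>\<Sum>j. b (j + N)\<bar> < r / 4"
      by (metis LIMSEQ_D diff_zero divide_pos_pos le_refl real_norm_def zero_less_numeral)
    have "(\<lambda>l. \<Sum>j<N. \<bar>a l j - b j\<bar>) \<longlonglongrightarrow> (\<Sum>j<N. \<bar>b j - b j\<bar>)"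
      by (intro tendsto_intros lim)
    then have "(\<lambda>l. \<Sum>j<N. \<bar>a l j - b j\<bar>) \<longlonglongrightarrow> 0" by simp
    then obtain L where L: "\<And>l. l \<ge> L \<Longrightarrow> norm (\<Sum>j<N. \<bar>a l j - b j\<bar>) < r / 4"
      using LIMSEQ_D[of _ 0 "r/4"] r by force
    show "\<exists>L. \<forall>l\<ge>L. norm ((\<Sum>j. \<bar>a l j - b j\<bar>) - 0) < r"
    proof (intro exI allI impI)
      fix l assume "l \<ge> L"
      from L[OF this] have "(\<Sum>j<N. \<bar>a l j - b j\<bar>) < r/4" by simp
      moreover have "0 \<le> (\<Sum>j. \<bar>a l j - b j\<bar>)" by (rule suminf_nonneg[OF sd]) simp
      ultimately show "norm ((\<Sum>j. \<bar>a l j - b j\<bar>) - 0) < r"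
        using key[of l N] N by simp
    qed
  qed
qed

lemma measure_density_int:
  fixes f :: "'a \<Rightarrow> real"
  assumes f: "f \<in> borel_measurable M" and B: "B \<in> sets M"
    and intg: "integrable M f"
  shows "measure (density M (\<lambda>y. ennreal (f y))) B = (\<integral>y. indicator B y * max (f y) 0 \<partial>M)"
proof -
  have i2: "integrable M (\<lambda>y. indicator B y * max (f y) 0)"
    apply (rule Bochner_Integration.integrable_bound[OF integrable_abs[OF intg]])
    using f B by (auto simp: indicator_def intro!: AE_I2)
  have "emeasure (density M (\<lambda>y. ennreal (f y))) B = (\<integral>\<^sup>+ y. ennreal (f y) * indicator B y \<partial>M)"
    using f B by (simp add: emeasure_density)
  also have "\<dots> = (\<integral>\<^sup>+ y. ennreal (indicator B y * max (f y) 0) \<partial>M)"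
    by (intro nn_integral_cong) (auto simp: indicator_def ennreal_max_0)
  also have "\<dots> = ennreal (\<integral>y. indicator B y * max (f y) 0 \<partial>M)"
    by (rule nn_integral_eq_integral[OF i2]) (auto simp: indicator_def)
  finally show ?thesis
    unfolding measure_def by (simp add: integral_nonneg_AE indicator_def)
qed

lemma dist_measures:
  fixes f g :: "'a::euclidean_space \<Rightarrow> real"
  assumes f: "f \<in> borel_measurable M" and g: "g \<in> borel_measurable M" and B: "B \<in> sets M"
    and S: "S \<in> sets M" and Sfin: "emeasure M S < \<infinity>"
    and f0: "\<And>y. y \<notin> S \<Longrightarrow> f y = 0" and g0: "\<And>y. y \<notin> S \<Longrightarrow> g y = 0"
    and fb: "\<And>y. y \<in> S \<Longrightarrow> \<bar>f y\<bar> \<le> C" and gb: "\<And>y. y \<in> S \<Longrightarrow> \<bar>g y\<bar> \<le> C"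
    and fg: "\<And>y. y \<in> S \<Longrightarrow> \<bar>f y - g y\<bar> \<le> D"
  shows "\<bar>measure (density M (\<lambda>y. ennreal (f y))) B - measure (density M (\<lambda>y. ennreal (g y))) B\<bar>
         \<le> D * measure M S"
proof -
  have iS: "integrable M (\<lambda>y. C * indicator S y)" using S Sfin by auto
  have intf: "integrable M f"
    apply (rule Bochner_Integration.integrable_bound[OF iS]) using f f0 fb by (auto simp: indicator_def intro!: AE_I2) (smt (verit))
  have ig: "integrable M g"
    apply (rule Bochner_Integration.integrable_bound[OF iS]) using g g0 gb by (auto simp: indicator_def intro!: AE_I2) (smt (verit))
  have i1: "integrable M (\<lambda>y. indicator B y * max (f y) 0)"
    apply (rule Bochner_Integration.integrable_bound[OF integrable_abs[OF intf]])
    using f B by (auto simp: indicator_def intro!: AE_I2)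
  have i2: "integrable M (\<lambda>y. indicator B y * max (g y) 0)"
    apply (rule Bochner_Integration.integrable_bound[OF integrable_abs[OF ig]])
    using g B by (auto simp: indicator_def intro!: AE_I2)
  have "\<bar>measure (density M (\<lambda>y. ennreal (f y))) B - measure (density M (\<lambda>y. ennreal (g y))) B\<bar>
     = \<bar>\<integral>y. indicator B y * max (f y) 0 - indicator B y * max (g y) 0 \<partial>M\<bar>"
    using measure_density_int[OF f B intf] measure_density_int[OF g B ig] i1 i2 by simp
  also have "\<dots> \<le> (\<integral>y. D * indicator S y \<partial>M)"
    apply (rule integral_abs_bound_integral)
    using i1 i2 S Sfin apply auto[2]
    using f0 g0 fg by (auto simp: indicator_def) (smt (verit) fg)+
  also have "\<dots> = D * measure M S" using S by simp
  finally show ?thesis .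
qed

lemma per_omega:
  fixes v :: "'x \<Rightarrow> real \<Rightarrow> real" and eta :: "nat \<Rightarrow> 'w \<Rightarrow> 'x \<Rightarrow> real"
    and theta :: "nat \<Rightarrow> 'w \<Rightarrow> real ^ 'm::finite" and k :: "'w \<Rightarrow> nat" and xs :: "nat \<Rightarrow> 'x"
  assumes th: "\<And>j. theta j \<omega> \<in> dm_simplex0"
    and W0: "\<And>l j. 0 \<le> sb_w v eta j (xs l) \<omega>"
    and Ws: "\<And>l. (\<lambda>j. sb_w v eta j (xs l) \<omega>) sums 1"
    and Wlim: "\<And>j. (\<lambda>l. sb_w v eta j (xs l) \<omega>) \<longlonglongrightarrow> sb_w v eta j (xs 0) \<omega>"
  shows "(\<lambda>l. SUP B\<in>{B \<in> sets borel. B \<subseteq> dm_simplex}.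
                   \<bar>measure (dmbpp_F v eta theta k (xs l) \<omega>) B
                    - measure (dmbpp_F v eta theta k (xs 0) \<omega>) B\<bar>) \<longlonglongrightarrow> 0"
proof -
  define K where "K = k \<omega>"
  define W where "W l j = sb_w v eta j (xs l) \<omega>" for l j
  define a where "a j = ceil_vec K (theta j \<omega>)" for j
  define d where "d j = dir_dens (a j) (alpha_last K (a j))" for j
  define S where "S = (dm_simplex :: (real ^ 'm) set)"
  define A where "A = {a :: 'm \<Rightarrow> nat. \<forall>i. a i \<le> K} \<times> {..K + CARD('m)}"
  define C where "C = (\<Sum>p\<in>A. \<bar>dir_const (fst p) (snd p)\<bar>)"
  define s where "s l = (\<Sum>j. \<bar>W l j - W 0 j\<bar>)" for l
  have finA: "finite A" unfolding A_def using finite_bounded_funs by blast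
  have C0: "0 \<le> C" unfolding C_def by (simp add: sum_nonneg)
  have dC: "\<bar>d j y\<bar> \<le> C" if "y \<in> S" for j y
  proof -
    have "(a j, alpha_last K (a j)) \<in> A"
      unfolding A_def a_def alpha_last_def using ceil_vec_le[OF th] by auto
    then have "\<bar>dir_const (a j) (alpha_last K (a j))\<bar> \<le> C"
      unfolding C_def using member_le_sum[OF _ _ finA, of _ "\<lambda>p. \<bar>dir_const (fst p) (snd p)\<bar>"] by force
    then show ?thesis using dir_dens_bound[of y] that unfolding d_def S_def by (meson order_trans)
  qed
  have sW: "summable (W l)" for l using Ws[of l] unfolding W_def by (simp add: sums_iff)
  have W0': "0 \<le> W l j" for l j using W0 by (simp add: W_def)
  have sumW: "suminf (W l) = 1" for l using Ws[of l] unfolding W_def by (simp add: sums_iff)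
  have sD: "summable (\<lambda>j. \<bar>W l j - W 0 j\<bar>)" for l
    by (rule summable_comparison_test[where g="\<lambda>j. W l j + W 0 j"])
       (use W0' sW in \<open>auto intro!: summable_add exI[of _ 0] abs_triangle_ineq4[THEN order_trans]\<close>)
  have slim: "s \<longlonglongrightarrow> 0"
    unfolding s_def by (rule scheffe_seq) (use W0 Ws Wlim in \<open>auto simp: W_def\<close>)
  define f where "f l = dmbpp_dens v eta theta k (xs l) \<omega>" for l
  have f_eq: "f l y = indicator S y * (\<Sum>j. W l j * d j y)" for l y
    unfolding f_def dmbpp_dens_def W_def d_def a_def K_def S_def by simp
  have Wd: "W l j * \<bar>d j y\<bar> \<le> C * W l j" if "y \<in> S" for l j y
    using mult_left_mono[OF dC[OF that, of j] W0'[of l j]] by (simp add: mult.commute)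
  have sWd: "summable (\<lambda>j. W l j * d j y)" if "y \<in> S" for l y
    by (rule summable_comparison_test[where g="\<lambda>j. C * W l j"])
       (use W0' sW dC[OF that] in \<open>auto simp: abs_mult intro!: summable_mult exI[of _ 0] Wd[OF that]\<close>)
  have f_out: "f l y = 0" if "y \<notin> S" for l y using that by (simp add: f_eq)
  have f_bd: "\<bar>f l y\<bar> \<le> C" if "y \<in> S" for l y
  proof -
    have "\<bar>f l y\<bar> = \<bar>\<Sum>j. W l j * d j y\<bar>" using that by (simp add: f_eq)
    also have "\<dots> \<le> (\<Sum>j. \<bar>W l j * d j y\<bar>)"
      by (rule summable_rabs) (rule summable_comparison_test[where g="\<lambda>j. C * W l j"],
          use Wd[OF that] W0' sW in \<open>auto simp: abs_mult intro!: summable_mult exI[of _ 0]\<close>)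
    also have "\<dots> \<le> (\<Sum>j. C * W l j)"
    proof (rule suminf_le)
      show "\<And>n. \<bar>W l n * d n y\<bar> \<le> C * W l n" using Wd[OF that] W0' by (simp add: abs_mult)
      show "summable (\<lambda>j. C * W l j)" by (intro summable_mult sW)
      show "summable (\<lambda>j. \<bar>W l j * d j y\<bar>)"
        by (rule summable_comparison_test[where g="\<lambda>j. C * W l j"])
           (use Wd[OF that] W0' sW in \<open>auto simp: abs_mult intro!: summable_mult exI[of _ 0]\<close>)
    qed
    also have "\<dots> = C" using sumW[of l] suminf_mult[OF sW[of l], of C] by simp
    finally show ?thesis .
  qed
  have f_diff: "\<bar>f l y - f 0 y\<bar> \<le> C * s l" if "y \<in> S" for l y
  proof -
    have Dd: "\<bar>W l j - W 0 j\<bar> * \<bar>d j y\<bar> \<le> C * \<bar>W l j - W 0 j\<bar>" for j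
      using mult_left_mono[OF dC[OF that, of j] abs_ge_zero[of "W l j - W 0 j"]] by (simp add: mult.commute)
    have sdd: "summable (\<lambda>j. \<bar>(W l j - W 0 j) * d j y\<bar>)"
      by (rule summable_comparison_test[where g="\<lambda>j. C * \<bar>W l j - W 0 j\<bar>"])
         (use sD Dd in \<open>auto simp: abs_mult intro!: summable_mult exI[of _ 0]\<close>)
    have "f l y - f 0 y = (\<Sum>j. W l j * d j y) - (\<Sum>j. W 0 j * d j y)" using that by (simp add: f_eq)
    also have "\<dots> = (\<Sum>j. (W l j - W 0 j) * d j y)"
      using suminf_diff[OF sWd[OF that, of l] sWd[OF that, of 0]] by (simp add: left_diff_distrib)
    finally have "\<bar>f l y - f 0 y\<bar> \<le> (\<Sum>j. \<bar>(W l j - W 0 j) * d j y\<bar>)"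
      using summable_rabs[OF sdd] by simp
    also have "\<dots> \<le> (\<Sum>j. C * \<bar>W l j - W 0 j\<bar>)"
      by (rule suminf_le[OF _ sdd summable_mult[OF sD]]) (use Dd in \<open>auto simp: abs_mult\<close>)
    also have "\<dots> = C * s l" unfolding s_def using suminf_mult[OF sD[of l], of C] by simp
    finally show ?thesis .
  qed
  have S_sets: "S \<in> sets lborel" unfolding S_def sets_lborel by (rule borel_closed[OF closed_dm_simplex])
  have S_fin: "emeasure lborel S < \<infinity>"
    using emeasure_mono[OF dm_simplex_sub, of lborel] emeasure_lborel_cbox_finite
    unfolding S_def by (metis (no_types, lifting) order_le_less_trans sets_lborel borel_closed closed_cbox)
  have d_meas: "d j \<in> borel_measurable lborel" for j unfolding d_def using dir_dens_meas by simp
  have f_meas: "f l \<in> borel_measurable lborel" for l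
  proof (rule borel_measurable_LIMSEQ_real[where u="\<lambda>n y. indicator S y * (\<Sum>j<n. W l j * d j y)"])
    fix y :: "real ^ 'm" assume "y \<in> space lborel"
    show "(\<lambda>n. indicator S y * (\<Sum>j<n. W l j * d j y)) \<longlonglongrightarrow> f l y"
    proof (cases "y \<in> S")
      case True
      then show ?thesis unfolding f_eq
        by (intro tendsto_mult tendsto_const summable_LIMSEQ sWd)
    next
      case False
      then show ?thesis by (simp add: f_out)
    qed
  next
    fix n
    show "(\<lambda>y. indicator S y * (\<Sum>j<n. W l j * d j y)) \<in> borel_measurable lborel"
      using S_sets d_meas by measurable
  qed
  have bound: "(SUP B\<in>{B \<in> sets borel. B \<subseteq> dm_simplex}.
                   \<bar>measure (dmbpp_F v eta theta k (xs l) \<omega>) B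
                    - measure (dmbpp_F v eta theta k (xs 0) \<omega>) B\<bar>) \<le> C * s l * measure lborel S"
    and bound0: "0 \<le> (SUP B\<in>{B \<in> sets borel. B \<subseteq> dm_simplex}.
                   \<bar>measure (dmbpp_F v eta theta k (xs l) \<omega>) B
                    - measure (dmbpp_F v eta theta k (xs 0) \<omega>) B\<bar>)" for l
  proof -
    have each: "\<bar>measure (dmbpp_F v eta theta k (xs l) \<omega>) B
                    - measure (dmbpp_F v eta theta k (xs 0) \<omega>) B\<bar> \<le> C * s l * measure lborel S"
      if "B \<in> {B \<in> sets borel. B \<subseteq> dm_simplex}" for B
      unfolding dmbpp_F_def f_def[symmetric]
      by (rule dist_measures[OF f_meas f_meas _ S_sets S_fin f_out f_out f_bd f_bd f_diff]) (use that in auto)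
    show "(SUP B\<in>{B \<in> sets borel. B \<subseteq> dm_simplex}.
                   \<bar>measure (dmbpp_F v eta theta k (xs l) \<omega>) B
                    - measure (dmbpp_F v eta theta k (xs 0) \<omega>) B\<bar>) \<le> C * s l * measure lborel S"
      by (rule cSUP_least) (use each in auto)
    have "\<bar>measure (dmbpp_F v eta theta k (xs l) \<omega>) {}
                    - measure (dmbpp_F v eta theta k (xs 0) \<omega>) {}\<bar> \<le> (SUP B\<in>{B \<in> sets borel. B \<subseteq> dm_simplex}.
                   \<bar>measure (dmbpp_F v eta theta k (xs l) \<omega>) B
                    - measure (dmbpp_F v eta theta k (xs 0) \<omega>) B\<bar>)"
      by (rule cSUP_upper) (use each in \<open>auto intro!: bdd_aboveI2\<close>)
    then show "0 \<le> (SUP B\<in>{B \<in> sets borel. B \<subseteq> dm_simplex}.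
                   \<bar>measure (dmbpp_F v eta theta k (xs l) \<omega>) B
                    - measure (dmbpp_F v eta theta k (xs 0) \<omega>) B\<bar>)"
      by (smt (verit))
  qed
  have "(\<lambda>l. C * s l * measure lborel S) \<longlonglongrightarrow> C * 0 * measure lborel S"
    by (intro tendsto_intros slim)
  then have lim0: "(\<lambda>l. C * s l * measure lborel S) \<longlonglongrightarrow> 0" by simp
  show ?thesis
    by (rule tendsto_sandwich[OF _ _ tendsto_const lim0]) (use bound bound0 in auto)
qed

lemma V_lim:
  fixes v :: "real ^ 'p \<Rightarrow> real \<Rightarrow> real" and e :: "real ^ 'p \<Rightarrow> real"
  assumes X: "\<forall>l. xs l \<in> X" and lim: "xs \<longlonglongrightarrow> xs 0"
    and ec: "continuous_on X e"
    and vc: "continuous_on UNIV (v (xs 0))"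
    and eq: "\<forall>x\<in>X. \<forall>r>0. \<exists>d>0. \<forall>a. \<forall>y\<in>X. dist y x < d \<longrightarrow> \<bar>v y a - v x a\<bar> < r"
  shows "(\<lambda>l. v (xs l) (e (xs l))) \<longlonglongrightarrow> v (xs 0) (e (xs 0))"
proof -
  have a: "(\<lambda>l. e (xs l)) \<longlonglongrightarrow> e (xs 0)"
    by (rule continuous_on_tendsto_compose[OF ec lim]) (use X in auto)
  have b: "(\<lambda>l. v (xs 0) (e (xs l))) \<longlonglongrightarrow> v (xs 0) (e (xs 0))"
    by (rule continuous_on_tendsto_compose[OF vc a]) auto
  have c: "(\<lambda>l. v (xs l) (e (xs l)) - v (xs 0) (e (xs l))) \<longlonglongrightarrow> 0"
  proof (rule LIMSEQ_I)
    fix r :: real assume r: "0 < r"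
    obtain d where d: "d > 0" "\<And>a y. y \<in> X \<Longrightarrow> dist y (xs 0) < d \<Longrightarrow> \<bar>v y a - v (xs 0) a\<bar> < r"
      using eq X r by meson
    obtain L where L: "\<And>l. l \<ge> L \<Longrightarrow> dist (xs l) (xs 0) < d"
      using lim d(1) by (metis LIMSEQ_iff_nz dist_norm)
    show "\<exists>L. \<forall>l\<ge>L. norm (v (xs l) (e (xs l)) - v (xs 0) (e (xs l)) - 0) < r"
      using L d(2) X by (intro exI[of _ L]) auto
  qed
  have "(\<lambda>l. (v (xs l) (e (xs l)) - v (xs 0) (e (xs l))) + v (xs 0) (e (xs l))) \<longlonglongrightarrow> 0 + v (xs 0) (e (xs 0))"
    by (rule tendsto_add[OF c b])
  then show ?thesis by simp
qed

theorem theorem6: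
  fixes M :: "'w measure"
    and X :: "(real ^ 'p) set"
    and v :: "real ^ 'p \<Rightarrow> real \<Rightarrow> real"
    and eta :: "nat \<Rightarrow> 'w \<Rightarrow> real ^ 'p \<Rightarrow> real"
    and theta :: "nat \<Rightarrow> 'w \<Rightarrow> real ^ 'm::finite"
    and k :: "'w \<Rightarrow> nat"
    and xs :: "nat \<Rightarrow> real ^ 'p"
  assumes P: "prob_space M"
    \<comment> \<open>eta_j: i.i.d. real-valued processes on X\<close>
    and eta_meas: "\<forall>j. \<forall>x\<in>X. (\<lambda>\<omega>. eta j \<omega> x) \<in> borel_measurable M"
    and eta_indep: "prob_space.indep_vars M (\<lambda>_. PiM X (\<lambda>_. borel))
                      (\<lambda>j \<omega>. restrict (eta j \<omega>) X) UNIV"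
    and eta_ident: "\<forall>j. distr M (PiM X (\<lambda>_. borel)) (\<lambda>\<omega>. restrict (eta j \<omega>) X)
                      = distr M (PiM X (\<lambda>_. borel)) (\<lambda>\<omega>. restrict (eta 0 \<omega>) X)"
    \<comment> \<open>theta_j: i.i.d. random vectors with values in Delta_m^0\<close>
    and theta_meas: "\<forall>j. theta j \<in> borel_measurable M"
    and theta_indep: "prob_space.indep_vars M (\<lambda>_. borel) theta UNIV"
    and theta_ident: "\<forall>j. distr M borel (theta j) = distr M borel (theta 0)"
    and theta_val: "\<forall>j. \<forall>\<omega>\<in>space M. theta j \<omega> \<in> dm_simplex0"
    \<comment> \<open>k: random positive integer\<close>
    and k_meas: "k \<in> measurable M (count_space UNIV)"
    and k_pos: "\<forall>\<omega>\<in>space M. 1 \<le> k \<omega>"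
    \<comment> \<open>the family V\<close>
    and v_cont: "\<forall>x\<in>X. continuous_on UNIV (v x)"
    and v_inj: "\<forall>x\<in>X. inj (v x)"
    and v_range: "\<forall>x\<in>X. range (v x) \<subseteq> {0..1}"
    and v_cont_x: "\<forall>a. continuous_on X (\<lambda>x. v x a)"
    and v_equicont: "\<forall>x\<in>X. \<forall>e>0. \<exists>d>0. \<forall>a. \<forall>y\<in>X. dist y x < d \<longrightarrow> \<bar>v y a - v x a\<bar> < e"
    \<comment> \<open>weights sum to one a.s.\<close>
    and w_sum: "\<forall>x\<in>X. AE \<omega> in M. (\<lambda>j. sb_w v eta j x \<omega>) sums 1"
    \<comment> \<open>each eta_j is a.s. continuous\<close>
    and eta_cont: "\<forall>j. AE \<omega> in M. continuous_on X (eta j \<omega>)"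
    \<comment> \<open>the sequence\<close>
    and xs_in: "\<forall>l. xs l \<in> X"
    and xs_lim: "xs \<longlonglongrightarrow> xs 0"
  shows "AE \<omega> in M.
           (\<lambda>l. SUP B\<in>{B \<in> sets borel. B \<subseteq> dm_simplex}.
                   \<bar>measure (dmbpp_F v eta theta k (xs l) \<omega>) B
                    - measure (dmbpp_F v eta theta k (xs 0) \<omega>) B\<bar>) \<longlonglongrightarrow> 0"
proof -
  have AE1: "AE \<omega> in M. \<forall>j. continuous_on X (eta j \<omega>)"
    using eta_cont by (simp add: AE_all_countable)
  have AE2: "AE \<omega> in M. \<forall>l. (\<lambda>j. sb_w v eta j (xs l) \<omega>) sums 1"
    using w_sum xs_in by (simp add: AE_all_countable)
  have main: "(\<lambda>l. SUP B\<in>{B \<in> sets borel. B \<subseteq> dm_simplex}.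
                   \<bar>measure (dmbpp_F v eta theta k (xs l) \<omega>) B
                    - measure (dmbpp_F v eta theta k (xs 0) \<omega>) B\<bar>) \<longlonglongrightarrow> 0"
    if om: "\<omega> \<in> space M" and ec: "\<forall>j. continuous_on X (eta j \<omega>)"
      and ws: "\<forall>l. (\<lambda>j. sb_w v eta j (xs l) \<omega>) sums 1" for \<omega>
  proof (rule per_omega)
    show "theta j \<omega> \<in> dm_simplex0" for j using theta_val om by blast
    have V01: "0 \<le> sb_V v eta j x \<omega> \<and> sb_V v eta j x \<omega> \<le> 1" if "x \<in> X" for j x
      using v_range that unfolding sb_V_def by fastforce
    show "0 \<le> sb_w v eta j (xs l) \<omega>" for l j
      unfolding sb_w_def using V01 xs_in by (auto intro!: mult_nonneg_nonneg prod_nonneg)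
    show "(\<lambda>j. sb_w v eta j (xs l) \<omega>) sums 1" for l using ws by blast
    have Vl: "(\<lambda>l. sb_V v eta j (xs l) \<omega>) \<longlonglongrightarrow> sb_V v eta j (xs 0) \<omega>" for j
      unfolding sb_V_def
      by (rule V_lim[OF xs_in xs_lim]) (use ec v_cont xs_in v_equicont in auto)
    show "(\<lambda>l. sb_w v eta j (xs l) \<omega>) \<longlonglongrightarrow> sb_w v eta j (xs 0) \<omega>" for j
      unfolding sb_w_def by (intro tendsto_intros Vl)
  qed
  show ?thesis
    using AE1 AE2 AE_space[of M] by eventually_elim (rule main; simp)
qed

end
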